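(* A frame $L$ is subfit if and only if each $S\in\mathfrak{B}(\mathrm{coS}(L))$ is a meet in $\mathrm{coS}(L)$ of closed sublocales.
   Context: A frame $L$ is subfit if for all $a,b\in L$ with $a\not\le b$ there is $c\in L$ with $a\vee c=1\ne b\vee c$. A sublocale of $L$ is a subset $S\subseteq L$ closed under arbitrary meets and such that $x\to s\in S$ for all $x\in L$, $s\in S$. $\mathrm{coS}(L)$ is the set of all sublocales of $L$ ordered by reverse inclusion; it is a frame, whose meets are the joins of sublocales under inclusion ($\bigwedge S_i=\{\bigwedge M\mid M\subseteq\bigcup S_i\}$). For $a\in L$, the closed sublocale is $\mathfrak{c}(a)=\{x\in L\mid x\ge a\}$. For a frame $M$, $\mathfrak{B}(M)=\{x\in M\mid x=x^{\ast\ast}\}$, where $^\ast$ is pseudocomplement in $M$. *)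

theory Defs
  imports Main
begin

text \<open>A frame: a complete lattice in which binary meets distribute over arbitrary joins.
  The frame L is the whole carrier of the type.\<close>
class frame = complete_lattice +
  assumes inf_Sup_frame: "inf a (Sup S) = Sup ((\<lambda>b. inf a b) ` S)"

definition subfit :: "'a::frame itself \<Rightarrow> bool" where
  "subfit _ \<longleftrightarrow> (\<forall>a b :: 'a. \<not> a \<le> b \<longrightarrow>
      (\<exists>c. sup a c = top \<and> sup b c \<noteq> top))"

definition himp :: "'a::frame \<Rightarrow> 'a \<Rightarrow> 'a" where
  "himp x s = Sup {y. inf y x \<le> s}"

definition is_sublocale :: "'a::frame set \<Rightarrow> bool" where
  "is_sublocale S \<longleftrightarrow> (\<forall>M. M \<subseteq> S \<longrightarrow> Inf M \<in> S) \<and> (\<forall>x s. s \<in> S \<longrightarrow> himp x s \<in> S)"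

text \<open>coS(L): sublocales ordered by reverse inclusion. Meets in coS(L) are joins of
  sublocales under inclusion.\<close>
definition coS_Meet :: "'a::frame set set \<Rightarrow> 'a set" where
  "coS_Meet F = {Inf M | M. M \<subseteq> \<Union>F}"

definition coS_meet :: "'a::frame set \<Rightarrow> 'a set \<Rightarrow> 'a set" where
  "coS_meet S T = coS_Meet {S, T}"

text \<open>Bottom of coS(L) is the whole frame L (= UNIV). Pseudocomplement in coS(L):
  the coS-greatest (i.e. inclusion-smallest) is_sublocale T with T \<and> S = 0.\<close>
definition coS_pc :: "'a::frame set \<Rightarrow> 'a set" where
  "coS_pc S = (THE T. is_sublocale T \<and> coS_meet T S = UNIV \<and>
       (\<forall>U. is_sublocale U \<and> coS_meet U S = UNIV \<longrightarrow> T \<subseteq> U))"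

definition Bool_coS :: "'a::frame set set" where
  "Bool_coS = {S. is_sublocale S \<and> S = coS_pc (coS_pc S)}"

definition closed_sub :: "'a::frame \<Rightarrow> 'a set" where
  "closed_sub a = {x. a \<le> x}"

end

theory Submission
  imports Defs
begin

context frame begin
subclass distrib_lattice
proof
  fix x y z :: 'a
  have d: "\<And>a b c. inf a (sup b c) = sup (inf a b) (inf a c)"
    using inf_Sup_frame[of _ "{_, _}"] by simp
  show "sup x (inf y z) = inf (sup x y) (sup x z)"
    by (rule distrib_imp1) (use d in blast)
qed
end

lemma himp_adj: "(y::'a::frame) \<le> himp x s \<longleftrightarrow> inf y x \<le> s"
proof
  assume "y \<le> himp x s"
  then have "inf y x \<le> inf x (himp x s)" by (metis inf_commute inf_mono order.refl)
  also have "\<dots> = Sup ((\<lambda>b. inf x b) ` {y. inf y x \<le> s})"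
    unfolding himp_def by (rule inf_Sup_frame)
  also have "\<dots> \<le> s" by (auto intro!: Sup_least simp: inf_commute)
  finally show "inf y x \<le> s" .
next
  assume "inf y x \<le> s" then show "y \<le> himp x s" unfolding himp_def by (auto intro: Sup_upper)
qed

lemma eq_by_le: "(\<And>y. (y::'a::order) \<le> p \<longleftrightarrow> y \<le> q) \<Longrightarrow> p = q"
  by (meson order.antisym order.refl)

lemma himp_top: "himp (top::'a::frame) x = x"
  by (rule eq_by_le) (simp add: himp_adj)

lemma himp_le_top: "(a::'a::frame) \<le> x \<Longrightarrow> himp a x = top"
  by (simp add: order.antisym himp_adj le_infI2)

lemma le_himp: "(x::'a::frame) \<le> himp a x"
  by (simp add: himp_adj)

lemma inf_himp: "inf (a::'a::frame) (himp a x) = inf a x"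
proof (rule order.antisym)
  show "inf a (himp a x) \<le> inf a x"
    using himp_adj[of "himp a x" a x] by (simp add: inf_commute)
  show "inf a x \<le> inf a (himp a x)"
    by (meson inf_le1 inf_le2 le_himp le_inf_iff order.trans)
qed

lemma himp_himp: "himp (a::'a::frame) (himp b s) = himp (inf a b) s"
  by (rule eq_by_le) (simp add: himp_adj inf_assoc inf_commute inf_left_commute)

lemma himp_Inf: "himp (a::'a::frame) (Inf N) = Inf (himp a ` N)"
  by (rule eq_by_le) (simp add: himp_adj le_Inf_iff)

lemma Meet_char: "x \<in> coS_Meet F \<longleftrightarrow> (x::'a::frame) = Inf {y \<in> \<Union>F. x \<le> y}"
proof
  assume "x \<in> coS_Meet F"
  then obtain N where N: "x = Inf N" "N \<subseteq> \<Union>F" unfolding coS_Meet_def by auto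
  have "Inf {y \<in> \<Union>F. x \<le> y} \<le> Inf N"
    by (rule Inf_superset_mono) (use N in \<open>auto intro: Inf_lower\<close>)
  then show "x = Inf {y \<in> \<Union>F. x \<le> y}" using N(1)
    by (auto intro!: order.antisym Inf_greatest)
next
  assume "x = Inf {y \<in> \<Union>F. x \<le> y}"
  then show "x \<in> coS_Meet F" unfolding coS_Meet_def by blast
qed

lemma Meet_Inf_closed:
  assumes "M \<subseteq> coS_Meet F" shows "Inf M \<in> coS_Meet (F::'a::frame set set)"
proof -
  let ?X = "Inf M"
  have "Inf {y \<in> \<Union>F. ?X \<le> y} \<le> m" if "m \<in> M" for m
  proof -
    have im: "?X \<le> m" using that by (rule Inf_lower)
    have "Inf {y \<in> \<Union>F. ?X \<le> y} \<le> Inf {y \<in> \<Union>F. m \<le> y}"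
      by (rule Inf_superset_mono) (auto intro: order.trans[OF im])
    also have "\<dots> = m"
    proof -
      have "m \<in> coS_Meet F" using assms that by (rule subsetD)
      then show ?thesis by (rule Meet_char[THEN iffD1, symmetric])
    qed
    finally show ?thesis .
  qed
  then have "Inf {y \<in> \<Union>F. ?X \<le> y} \<le> ?X" by (rule Inf_greatest)
  moreover have "?X \<le> Inf {y \<in> \<Union>F. ?X \<le> y}" by (rule Inf_greatest) auto
  ultimately have "?X = Inf {y \<in> \<Union>F. ?X \<le> y}" by (rule order.antisym[rotated])
  then show ?thesis by (rule Meet_char[THEN iffD2])
qed

lemma Meet_single: "x \<in> S \<Longrightarrow> S \<in> F \<Longrightarrow> (x::'a::frame) \<in> coS_Meet F"
  unfolding coS_Meet_def by (rule CollectI, rule exI[of _ "{x}"]) auto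

lemma closed_Meet_sublocale: "is_sublocale (coS_Meet (closed_sub ` (A::'a::frame set)))"
  unfolding is_sublocale_def
proof (intro conjI allI impI)
  fix M assume "M \<subseteq> coS_Meet (closed_sub ` A)"
  then show "Inf M \<in> coS_Meet (closed_sub ` A)" by (rule Meet_Inf_closed)
next
  fix x s assume "s \<in> coS_Meet (closed_sub ` A)"
  then obtain N where N: "s = Inf N" "N \<subseteq> \<Union>(closed_sub ` A)" unfolding coS_Meet_def by auto
  have "himp x ` N \<subseteq> \<Union>(closed_sub ` A)"
  proof
    fix z assume "z \<in> himp x ` N"
    then obtain n where n: "n \<in> N" "z = himp x n" by auto
    then obtain a where a: "a \<in> A" "a \<le> n" using N(2) unfolding closed_sub_def by auto
    have "a \<le> z" using a n le_himp[of n x] by (metis order.trans)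
    then show "z \<in> \<Union>(closed_sub ` A)" using a unfolding closed_sub_def by auto
  qed
  then show "himp x s \<in> coS_Meet (closed_sub ` A)"
    unfolding coS_Meet_def N(1) himp_Inf by blast
qed

definition nu :: "'a::frame set \<Rightarrow> 'a \<Rightarrow> 'a" where
  "nu T x = Inf {t \<in> T. x \<le> t}"

lemma nu_in: "is_sublocale T \<Longrightarrow> nu T x \<in> T"
  unfolding is_sublocale_def nu_def by auto

lemma nu_ge: "x \<le> nu T x"
  unfolding nu_def by (auto intro: Inf_greatest)

lemma nu_mono: assumes xw: "x \<le> w" shows "nu T x \<le> nu T (w::'a::frame)"
  unfolding nu_def by (rule Inf_superset_mono) (auto intro: order.trans[OF xw])

lemma key:
  assumes T: "is_sublocale T" and U: "is_sublocale U" and m: "coS_meet U T = UNIV"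
  shows "himp (nu T x) x \<in> U"
proof -
  have "x \<in> coS_Meet {U, T}" using m unfolding coS_meet_def by auto
  then obtain M where M: "x = Inf M" "M \<subseteq> U \<union> T" unfolding coS_Meet_def by auto
  define t' where "t' = Inf (M \<inter> T)"
  define u where "u = Inf (M \<inter> U)"
  have t'T: "t' \<in> T" using T unfolding is_sublocale_def t'_def by auto
  have uU: "u \<in> U" using U unfolding is_sublocale_def u_def by auto
  have "M = (M \<inter> T) \<union> (M \<inter> U)" using M(2) by auto
  then have xe: "x = inf t' u" unfolding t'_def u_def M(1) by (metis Inf_union_distrib)
  have "nu T x \<le> t'" unfolding nu_def using t'T xe by (auto intro: Inf_lower)
  have "himp (nu T x) x = himp (nu T x) u"
  proof (rule eq_by_le)
    fix y
    show "y \<le> himp (nu T x) x \<longleftrightarrow> y \<le> himp (nu T x) u"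
      unfolding himp_adj using xe \<open>nu T x \<le> t'\<close>
      by (metis inf.bounded_iff inf.coboundedI2 inf_le2 order.trans)
  qed
  moreover have "himp (nu T x) u \<in> U" using U uU unfolding is_sublocale_def by auto
  ultimately show ?thesis by simp
qed

lemma meet_decomp:
  assumes "t \<in> T" "u \<in> U" "x = inf t (u::'a::frame)"
  shows "x \<in> coS_meet U T"
  unfolding coS_meet_def coS_Meet_def using assms
  by (intro CollectI exI[of _ "{t, u}"]) auto

lemma pc_eq:
  assumes "is_sublocale T" "coS_meet T S = UNIV"
    "\<And>U. is_sublocale U \<Longrightarrow> coS_meet U S = UNIV \<Longrightarrow> T \<subseteq> U"
  shows "coS_pc S = T"
  unfolding coS_pc_def
  by (rule the_equality) (use assms in blast, meson assms subset_antisym)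

lemma pc_exists:
  assumes T: "is_sublocale (T::'a::frame set)"
  shows "is_sublocale (coS_pc T) \<and> coS_meet (coS_pc T) T = UNIV \<and>
    (\<forall>U. is_sublocale U \<and> coS_meet U T = UNIV \<longrightarrow> coS_pc T \<subseteq> U)"
proof -
  define U0 where "U0 = \<Inter>{U. is_sublocale U \<and> coS_meet U T = UNIV}"
  have s0: "is_sublocale U0" unfolding is_sublocale_def
  proof (intro conjI allI impI)
    fix M assume M: "M \<subseteq> U0"
    show "Inf M \<in> U0" unfolding U0_def
    proof
      fix U assume "U \<in> {U. is_sublocale U \<and> coS_meet U T = UNIV}"
      then have "is_sublocale U" "M \<subseteq> U" using M unfolding U0_def by auto
      then show "Inf M \<in> U" unfolding is_sublocale_def by blast
    qed
  next
    fix x s assume s: "s \<in> U0"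
    show "himp x s \<in> U0" unfolding U0_def
    proof
      fix U assume "U \<in> {U. is_sublocale U \<and> coS_meet U T = UNIV}"
      then have "is_sublocale U" "s \<in> U" using s unfolding U0_def by auto
      then show "himp x s \<in> U" unfolding is_sublocale_def by blast
    qed
  qed
  have m0: "coS_meet U0 T = UNIV"
  proof -
    have "x \<in> coS_meet U0 T" for x
    proof (rule meet_decomp)
      show "nu T x \<in> T" using nu_in[OF T] .
      show "himp (nu T x) x \<in> U0" unfolding U0_def using key[OF T] by auto
      show "x = inf (nu T x) (himp (nu T x) x)"
        by (simp add: inf_himp inf_absorb2 nu_ge)
    qed
    then show ?thesis by auto
  qed
  have mn: "\<And>U. is_sublocale U \<Longrightarrow> coS_meet U T = UNIV \<Longrightarrow> U0 \<subseteq> U"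
    unfolding U0_def by blast
  have "coS_pc T = U0" by (rule pc_eq[OF s0 m0 mn])
  then show ?thesis using s0 m0 mn by simp
qed

definition opn :: "'a::frame \<Rightarrow> 'a set" where
  "opn a = {x. himp a x = x}"

lemma closed_sublocale: "is_sublocale (closed_sub (a::'a::frame))"
  unfolding is_sublocale_def closed_sub_def
proof (intro conjI allI impI)
  fix M :: "'a set" assume "M \<subseteq> {x. a \<le> x}"
  then show "Inf M \<in> {x. a \<le> x}" by (auto intro: Inf_greatest)
next
  fix x s :: 'a assume "s \<in> {x. a \<le> x}"
  then show "himp x s \<in> {x. a \<le> x}" by (auto intro: order.trans[OF _ le_himp])
qed

lemma opn_sublocale: "is_sublocale (opn (a::'a::frame))"
  unfolding is_sublocale_def opn_def
proof (intro conjI allI impI)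
  fix M :: "'a set" assume M: "M \<subseteq> {x. himp a x = x}"
  have "himp a ` M = (\<lambda>x. x) ` M" by (rule image_cong) (use M in auto)
  then have "himp a ` M = M" by simp
  then show "Inf M \<in> {x. himp a x = x}" by (simp add: himp_Inf)
next
  fix x s assume "s \<in> {x. himp a x = (x::'a)}"
  then have "himp a s = s" by simp
  have "himp a (himp x s) = himp (inf x a) s" by (simp add: himp_himp inf_commute)
  also have "\<dots> = himp x (himp a s)" by (simp add: himp_himp)
  finally show "himp x s \<in> {x. himp a x = x}" using \<open>himp a s = s\<close> by simp
qed

lemma decomp_co: "x = inf (sup a x) (himp a (x::'a::frame))"
proof -
  have "inf (sup a x) (himp a x) = sup (inf a (himp a x)) (inf x (himp a x))"
    by (rule inf_sup_distrib2)
  also have "\<dots> = x" by (simp add: inf_himp inf_absorb1 le_himp sup_absorb2)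
  finally show ?thesis by simp
qed

lemma opn_himp: "himp a x \<in> opn (a::'a::frame)"
  unfolding opn_def by (simp add: himp_himp)

lemma meet_co1: "coS_meet (closed_sub a) (opn (a::'a::frame)) = UNIV"
proof -
  have "x \<in> coS_meet (closed_sub a) (opn a)" for x
  proof (rule meet_decomp[of "himp a x" _ "sup a x"])
    show "x = inf (himp a x) (sup a x)" using decomp_co[of x a] by (metis inf_commute)
  qed (auto simp: opn_himp closed_sub_def)
  then show ?thesis by auto
qed

lemma meet_co2: "coS_meet (opn a) (closed_sub (a::'a::frame)) = UNIV"
proof -
  have "x \<in> coS_meet (opn a) (closed_sub a)" for x
    by (rule meet_decomp[of "sup a x" _ "himp a x"])
       (auto simp: opn_himp closed_sub_def decomp_co)
  then show ?thesis by auto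
qed

lemma pc_opn: "coS_pc (opn a) = closed_sub (a::'a::frame)"
proof (rule pc_eq[OF closed_sublocale meet_co1])
  fix U assume U: "is_sublocale U" "coS_meet U (opn a) = UNIV"
  show "closed_sub a \<subseteq> U"
  proof
    fix y assume "y \<in> closed_sub a"
    then have ay: "a \<le> y" by (simp add: closed_sub_def)
    have "{t \<in> opn a. y \<le> t} = {top}"
    proof -
      have "t = top" if "t \<in> opn a" "y \<le> t" for t
        using that ay himp_le_top[of a t] unfolding opn_def by auto
      moreover have "top \<in> opn a" unfolding opn_def by (simp add: himp_le_top)
      ultimately show ?thesis by auto
    qed
    then have "nu (opn a) y = top" unfolding nu_def by simp
    then show "y \<in> U" using key[OF opn_sublocale U] by (metis himp_top)
  qed
qed

lemma pc_closed: "coS_pc (closed_sub a) = opn (a::'a::frame)"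
proof (rule pc_eq[OF opn_sublocale meet_co2])
  fix U assume U: "is_sublocale U" "coS_meet U (closed_sub a) = UNIV"
  show "opn a \<subseteq> U"
  proof
    fix y assume "y \<in> opn a"
    then have hy: "himp a y = y" by (simp add: opn_def)
    have "nu (closed_sub a) y = sup a y" unfolding nu_def closed_sub_def
      by (rule order.antisym) (auto intro: Inf_lower Inf_greatest)
    moreover have "himp (sup a y) y = himp a y"
      by (rule eq_by_le) (simp add: himp_adj inf_sup_distrib1)
    ultimately show "y \<in> U" using key[OF closed_sublocale U, of y] hy by simp
  qed
qed

lemma opn_Bool: "opn (a::'a::frame) \<in> Bool_coS"
  unfolding Bool_coS_def by (simp add: opn_sublocale pc_opn pc_closed)

lemma subfit_decomp:
  assumes sf: "subfit TYPE('a::frame)"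
  shows "himp a x = Inf {sup c (himp a x) | c. sup c a = (top::'a)}"
proof (rule order.antisym)
  let ?g = "himp a x"
  define z where "z = Inf {sup c ?g | c. sup c a = top}"
  show "?g \<le> Inf {sup c ?g | c. sup c a = top}" by (auto intro: Inf_greatest)
  show "Inf {sup c ?g | c. sup c a = top} \<le> ?g"
    unfolding z_def[symmetric] himp_adj
  proof (rule ccontr)
    assume "\<not> inf z a \<le> x"
    then obtain c where c: "sup (inf z a) c = top" "sup x c \<noteq> top"
      using sf unfolding subfit_def by blast
    have e: "inf (sup z c) (sup a c) = top" using c(1) by (simp add: sup_inf_distrib2)
    then have zc: "sup z c = top" and ac: "sup a c = top" by simp_all
    have ca: "sup c a = top" using ac by (simp add: sup_commute)
    have "z \<le> sup c ?g" unfolding z_def using ca by (auto intro: Inf_lower)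
    then have "sup z c \<le> sup c ?g" by (simp add: le_supI)
    then have cg: "sup c ?g = top" using zc by (simp add: top_unique)
    have "sup c (inf a ?g) = inf (sup c a) (sup c ?g)" by (rule sup_inf_distrib1)
    also have "\<dots> = top" using ca cg by simp
    finally have t: "sup c (inf a ?g) = top" .
    have "inf a ?g \<le> x" by (simp add: inf_himp)
    then have "sup c (inf a ?g) \<le> sup x c" by (simp add: le_supI1 le_supI2)
    then have "sup x c = top" using t by (simp add: top_unique)
    with c(2) show False by simp
  qed
qed

theorem lemma4p3:
  shows "subfit TYPE('a::frame) \<longleftrightarrow>
    (\<forall>S \<in> (Bool_coS :: 'a set set). \<exists>A :: 'a set. S = coS_Meet (closed_sub ` A))"
proof
  assume sf: "subfit TYPE('a::frame)"
  show "\<forall>S \<in> (Bool_coS :: 'a set set). \<exists>A :: 'a set. S = coS_Meet (closed_sub ` A)"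
  proof
    fix S :: "'a set" assume "S \<in> Bool_coS"
    then have Ss: "is_sublocale S" and SS: "S = coS_pc (coS_pc S)" by (auto simp: Bool_coS_def)
    define T where "T = coS_pc S"
    have Ts: "is_sublocale T" using pc_exists[OF Ss] by (simp add: T_def)
    have STm: "coS_meet S T = UNIV" and Smin: "\<And>U. is_sublocale U \<Longrightarrow> coS_meet U T = UNIV \<Longrightarrow> S \<subseteq> U"
      using pc_exists[OF Ts] SS unfolding T_def[symmetric] by auto
    define A where "A = {a. closed_sub a \<subseteq> S}"
    define K where "K = coS_Meet (closed_sub ` A)"
    have KS: "K \<subseteq> S"
    proof
      fix x assume "x \<in> K"
      then obtain N where N: "x = Inf N" "N \<subseteq> \<Union>(closed_sub ` A)"
        unfolding K_def coS_Meet_def by auto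
      have "N \<subseteq> S" using N(2) unfolding A_def by auto
      then show "x \<in> S" using Ss N(1) unfolding is_sublocale_def by auto
    qed
    have Ks: "is_sublocale K" unfolding K_def by (rule closed_Meet_sublocale)
    have KT: "coS_meet K T = UNIV"
    proof -
      have "x \<in> coS_meet K T" for x
      proof -
        let ?n = "nu T x"
        let ?g = "himp ?n x"
        define C where "C = {sup c ?g | c. sup c ?n = top}"
        have gC: "?g = Inf C" unfolding C_def by (rule subfit_decomp[OF sf])
        have xg: "x \<le> ?g" by (rule le_himp)
        have CK: "C \<subseteq> K"
        proof
          fix y assume "y \<in> C"
          then obtain c where c: "y = sup c ?g" "sup c ?n = top" unfolding C_def by auto
          have "closed_sub y \<subseteq> S"
          proof
            fix w assume "w \<in> closed_sub y"
            then have wy: "y \<le> w" by (simp add: closed_sub_def)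
            have gw: "?g \<le> w" using wy c(1) by (metis le_supE)
            have "?n \<le> nu T w" using xg gw by (intro nu_mono) (rule order.trans)
            moreover have "c \<le> nu T w" using wy c(1) nu_ge[of w T] by (metis le_supE order.trans)
            ultimately have "nu T w = top" using c(2)
              by (metis sup.bounded_iff sup_commute top.extremum_unique)
            then show "w \<in> S" using key[OF Ts Ss STm, of w] by (simp add: himp_top)
          qed
          then have "closed_sub y \<in> closed_sub ` A" unfolding A_def by auto
          then show "y \<in> K" unfolding K_def by (rule Meet_single[rotated]) (simp add: closed_sub_def)
        qed
        have "x = inf ?n (Inf C)" unfolding gC[symmetric]
          by (simp add: inf_himp inf_absorb2 nu_ge)
        also have "\<dots> = Inf (insert ?n C)" by simp
        finally have "x = Inf (insert ?n C)" .
        moreover have "insert ?n C \<subseteq> \<Union>{K, T}" using CK nu_in[OF Ts] by auto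
        ultimately show ?thesis unfolding coS_meet_def coS_Meet_def by blast
      qed
      then show ?thesis by auto
    qed
    have "S = K" using Smin[OF Ks KT] KS by auto
    then show "\<exists>A. S = coS_Meet (closed_sub ` A)" unfolding K_def by blast
  qed
next
  assume H: "\<forall>S \<in> (Bool_coS :: 'a set set). \<exists>A :: 'a set. S = coS_Meet (closed_sub ` A)"
  show "subfit TYPE('a)" unfolding subfit_def
  proof (intro allI impI)
    fix a b :: 'a assume ab: "\<not> a \<le> b"
    show "\<exists>c. sup a c = top \<and> sup b c \<noteq> top"
    proof (rule ccontr)
      assume nc: "\<not> (\<exists>c. sup a c = top \<and> sup b c \<noteq> top)"
      obtain A where A: "opn a = coS_Meet (closed_sub ` A)" using H opn_Bool by blast
      have "himp a b \<in> opn a" by (rule opn_himp)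
      then obtain M where M: "himp a b = Inf M" "M \<subseteq> \<Union>(closed_sub ` A)"
        unfolding A coS_Meet_def by auto
      have "m = top" if mM: "m \<in> M" for m
      proof -
        obtain c where c: "c \<in> A" "c \<le> m" using M(2) mM by (auto simp: closed_sub_def)
        have "sup c a \<in> coS_Meet (closed_sub ` A)"
          by (rule Meet_single[of _ "closed_sub c"]) (auto simp: closed_sub_def c)
        then have "himp a (sup c a) = sup c a" unfolding A[symmetric] opn_def by simp
        then have "sup a c = top" by (simp add: himp_le_top sup_commute)
        then have "sup b c = top" using nc by blast
        moreover have "b \<le> m" using M mM le_himp[of b a] by (metis Inf_lower order.trans)
        ultimately show "m = top" using c(2)
          by (metis sup.bounded_iff top.extremum_unique)
      qed
      then have "himp a b = top" using M(1) by (auto intro: Inf_top_conv(2)[THEN iffD2] simp: Inf_top_conv)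
      then show False using ab himp_adj[of top a b] by simp
    qed
  qed
qed

end
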